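(* Let $n\ge 1$ and let $\mathcal P(n,1,1)$ be the set of lattice paths with steps $(1,1)$ (up) and $(1,-1)$ (down) from $(0,0)$ to $(2n+1,1)$. (1) For each $k=1,2,\dots,n+1$, the number of paths in $\mathcal P(n,1,1)$ that start with an up step and have exactly $k$ up steps starting on or below the $x$-axis is $\frac{1}{n+1}\binom{2n}{n}$. (2) For each $k=1,2,\dots,n$, the number of paths in $\mathcal P(n,1,1)$ that start with a down step and have exactly $k$ down steps starting on or below the $x$-axis is $\frac{1}{n}\binom{2n}{n-1}$. (3) For each $k=1,2,\dots,2n+1$, the number of paths in $\mathcal P(n,1,1)$ with exactly $k$ vertices on or below the $x$-axis is $\frac{1}{2n+1}\binom{2n+1}{n}$.
   Context: A step starts on or below the $x$-axis if its initial vertex has $y$-coordinate $\le 0$. A vertex is on or below the $x$-axis if its $y$-coordinate is $\le 0$ (the final vertex, at height $1$, is never counted). *)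

theory Defs
  imports Complex_Main
begin

text \<open>A lattice path is a list of steps: True = up step (1,1), False = down step (1,-1).
  The path starts at (0,0); vertex i (0 <= i <= length p) is at (i, height p i).\<close>

definition step_val :: "bool \<Rightarrow> int" where
  "step_val b = (if b then 1 else -1)"

definition height :: "bool list \<Rightarrow> nat \<Rightarrow> int" where
  "height p i = (\<Sum>j<i. step_val (p ! j))"

definition paths :: "nat \<Rightarrow> bool list set" where
  "paths n = {p. length p = 2 * n + 1 \<and> height p (length p) = 1}"

definition low_ups :: "bool list \<Rightarrow> nat" where
  "low_ups p = card {i. i < length p \<and> p ! i \<and> height p i \<le> 0}"

definition low_downs :: "bool list \<Rightarrow> nat" where
  "low_downs p = card {i. i < length p \<and> \<not> p ! i \<and> height p i \<le> 0}"

definition low_vertices :: "bool list \<Rightarrow> nat" where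
  "low_vertices p = card {i. i < length p \<and> height p i \<le> 0}"

end

theory Submission imports Defs begin

lemma height_0[simp]: "height p 0 = 0" by (simp add: height_def)
lemma height_Suc: "height p (Suc i) = height p i + step_val (p!i)"
  by (simp add: height_def)

lemma mod_cases: "a < 2*L \<Longrightarrow> (a::nat) mod L = (if a < L then a else a - L)"
  by (simp add: le_mod_geq)

lemma height_rot:
  assumes "length p = L" "height p L = 1" "j < L"
  shows "i \<le> L \<Longrightarrow> height (rotate j p) i = (if i + j < L then height p (i+j) - height p j
           else height p (i+j-L) + 1 - height p j)"
proof (induction i)
  case 0 then show ?case using assms by simp
next
  case (Suc i)
  have il: "i < L" using Suc by simp
  have nth: "rotate j p ! i = p ! ((j+i) mod L)" using nth_rotate[of i p j] il assms by simp
  have IH: "height (rotate j p) i = (if i + j < L then height p (i+j) - height p j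
           else height p (i+j-L) + 1 - height p j)" using Suc il by simp
  show ?case
  proof (cases "Suc i + j < L")
    case True
    then show ?thesis using IH nth height_Suc[of "rotate j p" i] height_Suc[of p "i+j"]
      by (simp add: add.commute)
  next
    case F: False
    show ?thesis
    proof (cases "Suc i + j = L")
      case True
      then have "i + j < L" "(j+i) mod L = i+j" by auto
      then show ?thesis using IH nth height_Suc[of "rotate j p" i] height_Suc[of p "i+j"] True assms(2) add.commute[of j i]
        by simp
    next
      case False
      then have "\<not> i + j < L" "(j+i) mod L = i+j-L" "Suc i + j - L = Suc (i+j-L)" using F il assms
        by (auto simp: mod_cases)
      then show ?thesis using IH nth height_Suc[of "rotate j p" i] height_Suc[of p "i+j-L"] F
        by simp
    qed
  qed
qed

lemma bij_shift:
  assumes "j < (L::nat)"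
  shows "bij_betw (\<lambda>i. (j+i) mod L) {i. i<L \<and> Q((j+i) mod L)} {r. r<L \<and> Q r}"
proof (rule bij_betw_byWitness[where f'="\<lambda>r. (r + L - j) mod L"])
  show "\<forall>a\<in>{i. i < L \<and> Q ((j + i) mod L)}. ((j + a) mod L + L - j) mod L = a"
    using assms by (auto simp: mod_cases)
  show "\<forall>a'\<in>{r. r < L \<and> Q r}. (j + (a' + L - j) mod L) mod L = a'"
    using assms by (auto simp: mod_cases)
  show "(\<lambda>i. (j + i) mod L) ` {i. i < L \<and> Q ((j + i) mod L)} \<subseteq> {r. r < L \<and> Q r}"
    using assms by auto
  show "(\<lambda>r. (r + L - j) mod L) ` {r. r < L \<and> Q r} \<subseteq> {i. i < L \<and> Q ((j + i) mod L)}"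
    using assms by (auto simp: mod_cases)
qed

definition lowP :: "(bool \<Rightarrow> bool) \<Rightarrow> bool list \<Rightarrow> nat" where
  "lowP P q = card {i. i < length q \<and> P (q!i) \<and> height q i \<le> 0}"

definition rel :: "bool list \<Rightarrow> nat \<Rightarrow> nat \<Rightarrow> bool" where
  "rel p j r \<longleftrightarrow> height p r < height p j \<or> (height p r = height p j \<and> j \<le> r)"

lemma low_rot:
  assumes "length p = L" "height p L = 1" "j < L"
  shows "lowP P (rotate j p) = card {r. r < L \<and> P (p!r) \<and> rel p j r}"
proof -
  let ?Q = "\<lambda>r. P (p!r) \<and> rel p j r"
  have "{i. i < length (rotate j p) \<and> P (rotate j p!i) \<and> height (rotate j p) i \<le> 0}
      = {i. i<L \<and> ?Q((j+i) mod L)}"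
  proof (rule Collect_cong)
    fix i
    show "(i < length (rotate j p) \<and> P (rotate j p!i) \<and> height (rotate j p) i \<le> 0) =
         (i<L \<and> ?Q((j+i) mod L))"
    proof (cases "i < L")
      case True
      have nth: "rotate j p ! i = p ! ((j+i) mod L)" using nth_rotate[of i p j] True assms by simp
      show ?thesis using height_rot[OF assms, of i] True nth assms
        by (auto simp: mod_cases rel_def add.commute)
    qed (use assms in auto)
  qed
  then show ?thesis unfolding lowP_def using bij_betw_same_card[OF bij_shift[OF assms(3), of ?Q]]
    by simp
qed

lemma rank_bij:
  fixes h :: "nat \<Rightarrow> int"
  assumes fin: "finite J"
  shows "bij_betw (\<lambda>j. card {r\<in>J. h r < h j \<or> (h r = h j \<and> j \<le> r)}) J {1..card J}"
proof -
  let ?R = "\<lambda>j r. h r < h j \<or> (h r = h j \<and> j \<le> r)"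
  let ?c = "\<lambda>j. card {r\<in>J. ?R j r}"
  have less: "?c j < ?c j'" if "j \<in> J" "j' \<in> J" "j \<noteq> j'" "?R j' j" for j j'
  proof -
    have "{r\<in>J. ?R j r} \<subset> {r\<in>J. ?R j' r}"
    proof
      show "{r\<in>J. ?R j r} \<subseteq> {r\<in>J. ?R j' r}" using that by auto
      show "{r\<in>J. ?R j r} \<noteq> {r\<in>J. ?R j' r}" using that by auto
    qed
    then show ?thesis using fin by (intro psubset_card_mono) auto
  qed
  have inj: "inj_on ?c J"
  proof (rule inj_onI)
    fix j j' assume a: "j \<in> J" "j' \<in> J" "?c j = ?c j'"
    show "j = j'"
    proof (rule ccontr)
      assume "j \<noteq> j'"
      moreover have "?R j' j \<or> ?R j j'" by auto
      ultimately show False using less[of j j'] less[of j' j] a by auto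
    qed
  qed
  have sub: "?c ` J \<subseteq> {1..card J}"
  proof
    fix x assume "x \<in> ?c ` J"
    then obtain j where j: "j \<in> J" "x = ?c j" by auto
    have "j \<in> {r\<in>J. ?R j r}" using j by auto
    then have "?c j \<ge> 1" using fin by (metis (no_types, lifting) One_nat_def card_0_eq empty_iff
        finite_subset less_one linorder_not_le mem_Collect_eq subsetI)
    moreover have "?c j \<le> card J" using fin by (intro card_mono) auto
    ultimately show "x \<in> {1..card J}" using j by auto
  qed
  have "card (?c ` J) = card {1..card J}" using inj by (simp add: card_image)
  then have "?c ` J = {1..card J}" using sub by (intro card_subset_eq) auto
  then show ?thesis using inj by (simp add: bij_betw_def)
qed

lemma height_count:
  assumes "length p = L"
  shows "height p L = int (card {r. r < L \<and> p!r}) - int (card {r. r < L \<and> \<not> p!r})"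
    and "card {r. r < L \<and> p!r} + card {r. r < L \<and> \<not> p!r} = L"
proof -
  have "height p L = (\<Sum>j<L. if p!j then 1 else -1)" by (simp add: height_def step_val_def)
  also have "\<dots> = (\<Sum>j\<in>{r. r < L \<and> p!r}. 1) + (\<Sum>j\<in>{r. r < L \<and> \<not> p!r}. -1)"
  proof -
    have e1: "{..<L} \<inter> Collect ((!) p) = {r. r < L \<and> p!r}" by auto
    have e2: "{..<L} \<inter> - Collect ((!) p) = {r. r < L \<and> \<not> p!r}" by auto
    show ?thesis by (simp add: sum.If_cases e1 e2)
  qed
  finally show "height p L = int (card {r. r < L \<and> p!r}) - int (card {r. r < L \<and> \<not> p!r})"
    by simp
  have "{r. r < L \<and> p!r} \<union> {r. r < L \<and> \<not> p!r} = {..<L}" by auto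
  then have "card ({r. r < L \<and> p!r} \<union> {r. r < L \<and> \<not> p!r}) = L" by simp
  then show "card {r. r < L \<and> p!r} + card {r. r < L \<and> \<not> p!r} = L"
    by (subst (asm) card_Un_disjoint) auto
qed

lemma rot_in:
  assumes "length p = L" "height p L = 1" "j < L"
  shows "length (rotate j p) = L \<and> height (rotate j p) L = 1"
  using height_rot[OF assms, of L] assms by simp

lemma back_mod: "j < (L::nat) \<Longrightarrow> ((L - j) mod L + j) mod L = 0"
  by (cases "j = 0") auto

lemma main:
  fixes L :: nat and P :: "bool \<Rightarrow> bool"
  defines "A \<equiv> {p. length p = L \<and> height p L = 1}"
  assumes Lpos: "0 < L" and m: "\<forall>p\<in>A. card {r. r<L \<and> P(p!r)} = m" and k: "k \<in> {1..m}"
  shows "card {q\<in>A. P (hd q) \<and> lowP P q = k} * L = card A"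
proof -
  let ?S = "{q\<in>A. P (hd q) \<and> lowP P q = k}"
  let ?F = "\<lambda>p. {j. j<L \<and> P(p!j) \<and> lowP P (rotate j p) = k}"
  let ?T = "Sigma A ?F"
  have finA: "finite A"
  proof (rule finite_subset)
    show "A \<subseteq> {xs. set xs \<subseteq> UNIV \<and> length xs = L}" unfolding A_def by auto
    show "finite {xs. set xs \<subseteq> (UNIV::bool set) \<and> length xs = L}"
      by (rule finite_lists_length_eq) simp
  qed
  have fib: "card (?F p) = 1" if pA: "p \<in> A" for p
  proof -
    have lp: "length p = L" "height p L = 1" using pA unfolding A_def by auto
    let ?J = "{r. r<L \<and> P(p!r)}"
    let ?c = "\<lambda>j. card {r\<in>?J. height p r < height p j \<or> (height p r = height p j \<and> j \<le> r)}"
    have bij: "bij_betw ?c ?J {1..card ?J}" by (rule rank_bij) auto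
    have cJ: "card ?J = m" using m pA by auto
    have eq: "?F p = {j\<in>?J. ?c j = k}"
    proof (rule Collect_cong)
      fix j
      show "(j<L \<and> P(p!j) \<and> lowP P (rotate j p) = k) = (j\<in>?J \<and> ?c j = k)"
      proof (cases "j < L")
        case True
        have "{r. r < L \<and> P (p!r) \<and> rel p j r} = {r\<in>?J. height p r < height p j \<or> (height p r = height p j \<and> j \<le> r)}"
          by (auto simp: rel_def)
        then show ?thesis using low_rot[OF lp True, of P] True by simp
      qed simp
    qed
    obtain j0 where j0: "j0 \<in> ?J" "?c j0 = k" using bij k cJ unfolding bij_betw_def
      by (metis (no_types, lifting) imageE)
    have "{j\<in>?J. ?c j = k} = {j0}"
    proof
      show "{j0} \<subseteq> {j\<in>?J. ?c j = k}" using j0 by auto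
      show "{j\<in>?J. ?c j = k} \<subseteq> {j0}" using j0 bij unfolding bij_betw_def inj_on_def by auto
    qed
    then show ?thesis using eq by simp
  qed
  have cT: "card ?T = card A"
    using finA fib by (subst card_SigmaI) auto
  have bij: "bij_betw (\<lambda>(p,j). (rotate j p, j)) ?T (?S \<times> {..<L})"
  proof (rule bij_betw_byWitness[where f'="\<lambda>(q,j). (rotate ((L-j) mod L) q, j)"])
    show "\<forall>a\<in>?T. (\<lambda>(q,j). (rotate ((L-j) mod L) q, j)) ((\<lambda>(p,j). (rotate j p, j)) a) = a"
    proof
      fix a assume "a \<in> ?T"
      then obtain p j where a: "a = (p,j)" "p \<in> A" "j < L" by auto
      have "rotate ((L-j) mod L) (rotate j p) = p"
        using a back_mod[of j L] by (simp add: rotate_rotate A_def add.commute)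
      then show "(\<lambda>(q,j). (rotate ((L-j) mod L) q, j)) ((\<lambda>(p,j). (rotate j p, j)) a) = a"
        using a by simp
    qed
    show "\<forall>a\<in>?S \<times> {..<L}. (\<lambda>(p,j). (rotate j p, j)) ((\<lambda>(q,j). (rotate ((L-j) mod L) q, j)) a) = a"
    proof
      fix a assume "a \<in> ?S \<times> {..<L}"
      then obtain q j where a: "a = (q,j)" "q \<in> A" "j < L" by auto
      have "rotate j (rotate ((L-j) mod L) q) = q"
        using a back_mod[of j L] by (simp add: rotate_rotate A_def add.commute[of j])
      then show "(\<lambda>(p,j). (rotate j p, j)) ((\<lambda>(q,j). (rotate ((L-j) mod L) q, j)) a) = a"
        using a by simp
    qed
    show "(\<lambda>(p,j). (rotate j p, j)) ` ?T \<subseteq> ?S \<times> {..<L}"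
    proof
      fix b assume "b \<in> (\<lambda>(p,j). (rotate j p, j)) ` ?T"
      then obtain p j where b: "b = (rotate j p, j)" "p \<in> A" "j < L" "P (p!j)"
        "lowP P (rotate j p) = k" by auto
      have lp: "length p = L" "height p L = 1" using b unfolding A_def by auto
      have "hd (rotate j p) = p ! j"
        using b lp Lpos by (subst hd_rotate_conv_nth) auto
      then show "b \<in> ?S \<times> {..<L}" using b rot_in[OF lp b(3)] unfolding A_def by auto
    qed
    show "(\<lambda>(q,j). (rotate ((L-j) mod L) q, j)) ` (?S \<times> {..<L}) \<subseteq> ?T"
    proof
      fix b assume "b \<in> (\<lambda>(q,j). (rotate ((L-j) mod L) q, j)) ` (?S \<times> {..<L})"
      then obtain q j where b: "b = (rotate ((L-j) mod L) q, j)" "q \<in> A" "j < L" "P (hd q)"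
        "lowP P q = k" by auto
      have lq: "length q = L" "height q L = 1" using b unfolding A_def by auto
      have r: "rotate j (rotate ((L-j) mod L) q) = q"
        using b back_mod[of j L] lq by (simp add: rotate_rotate add.commute[of j])
      have "rotate ((L-j) mod L) q ! j = q ! 0"
        using b lq back_mod[of j L] by (simp add: nth_rotate)
      moreover have "hd q = q ! 0" using lq Lpos by (intro hd_conv_nth) auto
      moreover have "(L-j) mod L < L" using Lpos by simp
      ultimately show "b \<in> ?T" using b r rot_in[OF lq, of "(L-j) mod L"] unfolding A_def by auto
    qed
  qed
  have "card ?T = card (?S \<times> {..<L})" using bij_betw_same_card[OF bij] .
  then show ?thesis using cT by (simp add: card_cartesian_product)
qed

lemma paths_alt: "paths n = {p. length p = 2*n+1 \<and> height p (2*n+1) = 1}"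
  unfolding paths_def by auto

lemma paths_count: "paths n = {p. length p = 2*n+1 \<and> card {r. r < 2*n+1 \<and> p!r} = n+1}"
proof -
  have "(height p (2*n+1) = 1) = (card {r. r < 2*n+1 \<and> p!r} = n+1)" if "length p = 2*n+1" for p
    using height_count[OF that] by auto
  then show ?thesis unfolding paths_alt by blast
qed

lemma counts:
  assumes "p \<in> paths n"
  shows "card {r. r < 2*n+1 \<and> p!r} = n+1" "card {r. r < 2*n+1 \<and> \<not> p!r} = n"
  using assms height_count[of p "2*n+1"] unfolding paths_alt by auto

lemma card_paths: "card (paths n) = (2*n+1) choose (n+1)"
proof -
  let ?L = "2*n+1"
  have "bij_betw (\<lambda>p. {r. r < ?L \<and> p!r}) (paths n) {B. B \<subseteq> {..<?L} \<and> card B = n+1}"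
  proof (rule bij_betw_byWitness[where f'="\<lambda>B. map (\<lambda>i. i\<in>B) [0..<?L]"])
    show "\<forall>a\<in>paths n. map (\<lambda>i. i \<in> {r. r < ?L \<and> a ! r}) [0..<?L] = a"
    proof
      fix a assume "a \<in> paths n"
      then have "length a = ?L" unfolding paths_alt by auto
      then show "map (\<lambda>i. i \<in> {r. r < ?L \<and> a ! r}) [0..<?L] = a"
        by (intro nth_equalityI) (auto simp del: upt_Suc)
    qed
    show "\<forall>a'\<in>{B. B \<subseteq> {..<?L} \<and> card B = n+1}. {r. r < ?L \<and> map (\<lambda>i. i \<in> a') [0..<?L] ! r} = a'"
      by (auto simp del: upt_Suc)
    show "(\<lambda>p. {r. r < ?L \<and> p ! r}) ` paths n \<subseteq> {B. B \<subseteq> {..<?L} \<and> card B = n+1}"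
      unfolding paths_count by auto
    have "{r. r < ?L \<and> map (\<lambda>i. i \<in> B) [0..<?L] ! r} = B" if "B \<subseteq> {..<?L}" for B
      using that by (auto simp del: upt_Suc)
    then show "(\<lambda>B. map (\<lambda>i. i\<in>B) [0..<?L]) ` {B. B \<subseteq> {..<?L} \<and> card B = n+1} \<subseteq> paths n"
      unfolding paths_count by auto
  qed
  then have "card (paths n) = card {B. B \<subseteq> {..<?L} \<and> card B = n+1}" by (rule bij_betw_same_card)
  also have "\<dots> = ?L choose (n+1)" by (subst n_subsets) auto
  finally show ?thesis .
qed

lemma mainP:
  assumes "\<forall>p\<in>paths n. card {r. r<2*n+1 \<and> P(p!r)} = m" "k \<in> {1..m}"
  shows "card {q\<in>paths n. P (hd q) \<and> lowP P q = k} * (2*n+1) = (2*n+1) choose (n+1)"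
  using main[of "2*n+1" P m k] assms unfolding card_paths[symmetric] paths_alt by simp

theorem theorem5:
  fixes n :: nat
  assumes "n \<ge> 1"
  shows "(\<forall>k\<in>{1..n+1}. real (card {p \<in> paths n. hd p \<and> low_ups p = k})
            = real ((2*n) choose n) / real (n+1))
       \<and> (\<forall>k\<in>{1..n}. real (card {p \<in> paths n. \<not> hd p \<and> low_downs p = k})
            = real ((2*n) choose (n-1)) / real n)
       \<and> (\<forall>k\<in>{1..2*n+1}. real (card {p \<in> paths n. low_vertices p = k})
            = real ((2*n+1) choose n) / real (2*n+1))"
proof -
  have b1: "(2*n+1) * ((2*n) choose n) = ((2*n+1) choose (n+1)) * (n+1)"
    using Suc_times_binomial_eq[of "2*n" n] by simp
  have b2: "(2*n+1) * ((2*n) choose (n-1)) = ((2*n+1) choose (n+1)) * n"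
  proof -
    have "(2*n+1) * ((2*n) choose (n-1)) = ((2*n+1) choose n) * n"
      using Suc_times_binomial_eq[of "2*n" "n-1"] assms by simp
    moreover have "(2*n+1) choose n = (2*n+1) choose (n+1)"
      using binomial_symmetric[of n "2*n+1"] by simp
    ultimately show ?thesis by simp
  qed
  have b3: "(2*n+1) choose n = (2*n+1) choose (n+1)"
    using binomial_symmetric[of n "2*n+1"] by simp
  have key: "real c = real N / real (2*n+1)" if "c * (2*n+1) = N" for c N
    using that by (simp add: field_simps flip: of_nat_mult)
  have "real (card {p \<in> paths n. hd p \<and> low_ups p = k}) = real ((2*n) choose n) / real (n+1)"
    if k: "k \<in> {1..n+1}" for k
  proof -
    have "card {q\<in>paths n. (\<lambda>b. b) (hd q) \<and> lowP (\<lambda>b. b) q = k} * (2*n+1) = (2*n+1) choose (n+1)"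
      using mainP[of n "\<lambda>b. b" "n+1" k] counts k by auto
    moreover have "{q\<in>paths n. (\<lambda>b. b) (hd q) \<and> lowP (\<lambda>b. b) q = k} = {p \<in> paths n. hd p \<and> low_ups p = k}"
      by (simp add: lowP_def low_ups_def)
    ultimately have e: "card {p \<in> paths n. hd p \<and> low_ups p = k} * (2*n+1) = (2*n+1) choose (n+1)"
      by simp
    have "real (card {p \<in> paths n. hd p \<and> low_ups p = k}) = real ((2*n+1) choose (n+1)) / real (2*n+1)"
      by (rule key[OF e])
    also have "\<dots> = real ((2*n) choose n) / real (n+1)"
      using b1 by (simp add: field_simps flip: of_nat_mult)
    finally show ?thesis .
  qed
  moreover have "real (card {p \<in> paths n. \<not> hd p \<and> low_downs p = k}) = real ((2*n) choose (n-1)) / real n"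
    if k: "k \<in> {1..n}" for k
  proof -
    have "card {q\<in>paths n. Not (hd q) \<and> lowP Not q = k} * (2*n+1) = (2*n+1) choose (n+1)"
      using mainP[of n Not n k] counts k by auto
    moreover have "{q\<in>paths n. Not (hd q) \<and> lowP Not q = k} = {p \<in> paths n. \<not> hd p \<and> low_downs p = k}"
      by (simp add: lowP_def low_downs_def)
    ultimately have e: "card {p \<in> paths n. \<not> hd p \<and> low_downs p = k} * (2*n+1) = (2*n+1) choose (n+1)"
      by simp
    have "real (card {p \<in> paths n. \<not> hd p \<and> low_downs p = k}) = real ((2*n+1) choose (n+1)) / real (2*n+1)"
      by (rule key[OF e])
    also have "\<dots> = real ((2*n) choose (n-1)) / real n"
      using b2 assms by (simp add: field_simps flip: of_nat_mult)
    finally show ?thesis .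
  qed
  moreover have "real (card {p \<in> paths n. low_vertices p = k}) = real ((2*n+1) choose n) / real (2*n+1)"
    if k: "k \<in> {1..2*n+1}" for k
  proof -
    have "card {q\<in>paths n. (\<lambda>_. True) (hd q) \<and> lowP (\<lambda>_. True) q = k} * (2*n+1) = (2*n+1) choose (n+1)"
      using mainP[of n "\<lambda>_. True" "2*n+1" k] k by auto
    moreover have "{q\<in>paths n. (\<lambda>_. True) (hd q) \<and> lowP (\<lambda>_. True) q = k} = {p \<in> paths n. low_vertices p = k}"
      by (simp add: lowP_def low_vertices_def)
    ultimately have e: "card {p \<in> paths n. low_vertices p = k} * (2*n+1) = (2*n+1) choose n"
      using b3 by simp
    show ?thesis by (rule key[OF e])
  qed
  ultimately show ?thesis by blast
qed
end
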